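(* Let $F$ be a face of a polyhedron $Q\subset V$ and $v\in V$. Let $y\in\mathrm{relint}(\sigma_F)$ and let $H=\{x\in V:\langle y,x\rangle=\langle y,v\rangle\}$, $H^-=\{x\in V:\langle y,x\rangle\le\langle y,v\rangle\}$. Then for every $P\in\mathrm{Def}^+(Q)$, the affine cone $C_F+v$ tightly contains $P$ if and only if $P\subseteq H^-$ and $\emptyset\subsetneq P\cap H\subseteq\mathrm{lineal}(C_F)+v$.
   Context: $V$ is a finite-dimensional real vector space with inner product $\langle\cdot,\cdot\rangle$. For a polyhedron $Q$, $\Sigma_Q$ is its outer normal fan; for a face $F$, $\sigma_F\in\Sigma_Q$ is the cone of linear functionals attaining their maximum on $Q$ exactly on $F$; the tangent cone of $Q$ at $F$ is $C_F=\sigma_F^\vee=\mathrm{Cone}(v'-v\mid v\in F,v'\in Q)$. A polyhedron $P$ is an extended deformation of $Q$ if each cone of $\Sigma_P$ is a union of cones of $\Sigma_Q$; $\mathrm{Def}^+(Q)$ is the set of extended deformations of $Q$. $\mathrm{lineal}(C)$ is the lineality space of a cone $C$. A translate $C+v$ tightly contains a polyhedron $P$ if $P\subseteq C+v$ and $P\cap(\mathrm{lineal}(C)+v)\ne\emptyset$. *)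

theory Defs
  imports "HOL-Analysis.Analysis"
begin

text \<open>Linear functionals on V are identified with vectors via the inner product.\<close>

definition argmax_on :: "'a::euclidean_space set \<Rightarrow> 'a \<Rightarrow> 'a set" where
  "argmax_on Q y = {x \<in> Q. \<forall>z\<in>Q. y \<bullet> z \<le> y \<bullet> x}"

definition normal_cone :: "'a::euclidean_space set \<Rightarrow> 'a set \<Rightarrow> 'a set" where
  "normal_cone Q F = {y. argmax_on Q y = F}"

definition normal_fan :: "'a::euclidean_space set \<Rightarrow> 'a set set" where
  "normal_fan Q = {normal_cone Q F | F. F face_of Q \<and> F \<noteq> {}}"

definition tangent_cone :: "'a::euclidean_space set \<Rightarrow> 'a set \<Rightarrow> 'a set" where
  "tangent_cone Q F = convex_cone hull {v' - v | v v'. v \<in> F \<and> v' \<in> Q}"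

definition lineal :: "'a::real_vector set \<Rightarrow> 'a set" where
  "lineal C = C \<inter> uminus ` C"

definition ext_deformations :: "'a::euclidean_space set \<Rightarrow> 'a set set" where
  "ext_deformations Q = {P. polyhedron P \<and>
      (\<forall>\<sigma>\<in>normal_fan P. \<exists>S. S \<subseteq> normal_fan Q \<and> \<sigma> = \<Union>S)}"

definition tightly_contains :: "'a::real_vector set \<Rightarrow> 'a \<Rightarrow> 'a set \<Rightarrow> bool" where
  "tightly_contains C v P \<longleftrightarrow>
     P \<subseteq> (\<lambda>x. x + v) ` C \<and> P \<inter> ((\<lambda>x. x + v) ` lineal C) \<noteq> {}"

end

theory Submission
  imports Defs
begin

lemma dir_into_polyhedron:
  fixes Q :: "'a::euclidean_space set"
  assumes "polyhedron Q" "f0 \<in> Q"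
    and H: "\<And>a b. (\<forall>q\<in>Q. a \<bullet> q \<le> b) \<Longrightarrow> a \<bullet> f0 = b \<Longrightarrow> a \<bullet> d \<le> 0"
  shows "\<exists>t>0. f0 + t *\<^sub>R d \<in> Q"
proof -
  obtain \<F> a b where fin: "finite \<F>" and Qeq: "Q = \<Inter>\<F>"
    and ab: "\<And>h. h \<in> \<F> \<Longrightarrow> a h \<noteq> 0 \<and> h = {x. a h \<bullet> x \<le> b h}"
    using assms(1) unfolding polyhedron_def by metis
  define N where "N = {h\<in>\<F>. a h \<bullet> f0 \<noteq> b h}"
  define U where "U = \<Inter>((\<lambda>h. {x. a h \<bullet> x < b h}) ` N)"
  have "open U" unfolding U_def N_def
    using fin by (intro open_Inter) (auto simp: open_halfspace_lt)
  moreover have "f0 \<in> U"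
  proof -
    have "a h \<bullet> f0 < b h" if "h \<in> N" for h
    proof -
      have "f0 \<in> h" using that assms(2) Qeq N_def by auto
      have hq: "h = {x. a h \<bullet> x \<le> b h}" using ab[of h] that N_def by blast
      have "a h \<bullet> f0 \<le> b h" using \<open>f0 \<in> h\<close> by (subst (asm) hq) simp
      then show ?thesis using that N_def by auto
    qed
    then show ?thesis by (auto simp: U_def)
  qed
  ultimately obtain e where e: "e > 0" "ball f0 e \<subseteq> U"
    using open_contains_ball by blast
  define t where "t = e / (2 * (norm d + 1))"
  have t: "t > 0" using e by (simp add: t_def add_nonneg_pos)
  have "t * norm d < e"
  proof -
    have "t * norm d \<le> t * (norm d + 1)" using t by simp
    also have "\<dots> = e / 2" unfolding t_def
      using norm_ge_zero[of d] by (simp add: divide_simps; linarith)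
    finally show ?thesis using e by simp
  qed
  then have "f0 + t *\<^sub>R d \<in> U" using e t
    by (auto simp: dist_norm intro!: subsetD[OF e(2)])
  have "f0 + t *\<^sub>R d \<in> h" if "h \<in> \<F>" for h
  proof (cases "h \<in> N")
    case True
    then have lt: "a h \<bullet> (f0 + t *\<^sub>R d) < b h" using \<open>f0 + t *\<^sub>R d \<in> U\<close> unfolding U_def by auto
    have hq: "h = {x. a h \<bullet> x \<le> b h}" using ab[OF that] by blast
    show ?thesis by (subst hq) (simp add: less_imp_le[OF lt])
  next
    case False
    then have eq: "a h \<bullet> f0 = b h" using that N_def by auto
    have hq: "h = {x. a h \<bullet> x \<le> b h}" using ab[OF that] by blast
    have "\<forall>q\<in>Q. q \<in> h" using that Qeq by blast
    then have "\<forall>q\<in>Q. a h \<bullet> q \<le> b h" by (subst (asm) hq) simp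
    then have "a h \<bullet> d \<le> 0" using H eq by blast
    then have "t * (a h \<bullet> d) \<le> 0" using t by (simp add: mult_nonneg_nonpos)
    then have le: "a h \<bullet> (f0 + t *\<^sub>R d) \<le> b h" using eq by (simp add: inner_add_right)
    show ?thesis by (subst hq) (simp add: le)
  qed
  then show ?thesis using Qeq t by blast
qed

lemma transl_mem: "(x::'a::real_vector) \<in> (\<lambda>x. x + v) ` C \<longleftrightarrow> x - v \<in> C"
proof
  assume "x \<in> (\<lambda>x. x + v) ` C" then show "x - v \<in> C" by auto
next
  assume "x - v \<in> C" then show "x \<in> (\<lambda>x. x + v) ` C"
    by (rule rev_image_eqI) simp
qed

theorem lemma2p4:
  fixes Q F P :: "'a::euclidean_space set" and v y :: 'a
  assumes "polyhedron Q" and "F face_of Q" and "F \<noteq> {}"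
    and "y \<in> rel_interior (normal_cone Q F)"
    and "P \<in> ext_deformations Q"
  shows "tightly_contains (tangent_cone Q F) v P \<longleftrightarrow>
           P \<subseteq> {x. y \<bullet> x \<le> y \<bullet> v} \<and>
           {} \<subset> P \<inter> {x. y \<bullet> x = y \<bullet> v} \<and>
           P \<inter> {x. y \<bullet> x = y \<bullet> v} \<subseteq> (\<lambda>x. x + v) ` lineal (tangent_cone Q F)"
proof -
  define C where "C = tangent_cone Q F"
  have FQ: "F \<subseteq> Q" using assms(2) face_of_imp_subset by blast
  have yF: "argmax_on Q y = F"
    using rel_interior_subset assms(4) by (auto simp: normal_cone_def)
  have yle: "y \<bullet> q \<le> y \<bullet> f" if "q \<in> Q" "f \<in> F" for q f
    using yF that unfolding argmax_on_def by blast
  define K where "K = {d. y \<bullet> d \<le> 0 \<and> (y \<bullet> d = 0 \<longrightarrow> -d \<in> C)}"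
  have Ccc: "convex_cone C" unfolding C_def tangent_cone_def
    by (rule convex_cone_convex_cone_hull)
  have gen: "q - f \<in> C" if "q \<in> Q" "f \<in> F" for q f
    unfolding C_def tangent_cone_def using that by (intro hull_inc) blast
  have CK: "C \<subseteq> K"
    unfolding C_def tangent_cone_def
  proof (rule hull_minimal)
    show "{v' - v |v v'. v \<in> F \<and> v' \<in> Q} \<subseteq> K"
    proof clarify
      fix f q assume f: "f \<in> F" and q: "q \<in> Q"
      have "y \<bullet> (q - f) \<le> 0" using yle[OF q f] by (simp add: inner_diff_right)
      moreover have "-(q - f) \<in> C" if "y \<bullet> (q - f) = 0"
      proof -
        have "q \<in> argmax_on Q y" using that q yle f unfolding argmax_on_def
          by (auto simp: inner_diff_right)
        then have "q \<in> F" using yF by simp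
        then show ?thesis using gen[of f q] FQ f by auto
      qed
      ultimately show "q - f \<in> K" unfolding K_def by (auto simp: C_def)
    qed
    show "convex_cone K" unfolding convex_cone_iff K_def
    proof (intro conjI ballI allI impI)
      show "(0::'a) \<in> {d. y \<bullet> d \<le> 0 \<and> (y \<bullet> d = 0 \<longrightarrow> - d \<in> C)}"
          using convex_cone_contains_0[OF Ccc] by simp
    next
      fix x z assume x: "x \<in> {d. y \<bullet> d \<le> 0 \<and> (y \<bullet> d = 0 \<longrightarrow> - d \<in> C)}"
        and z: "z \<in> {d. y \<bullet> d \<le> 0 \<and> (y \<bullet> d = 0 \<longrightarrow> - d \<in> C)}"
      show "x + z \<in> {d. y \<bullet> d \<le> 0 \<and> (y \<bullet> d = 0 \<longrightarrow> - d \<in> C)}"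
        using x z convex_cone_add[OF Ccc, of "-x" "-z"] by (auto simp: inner_add_right)
    next
      fix x and c :: real assume x: "x \<in> {d. y \<bullet> d \<le> 0 \<and> (y \<bullet> d = 0 \<longrightarrow> - d \<in> C)}" and c: "0 \<le> c"
      show "c *\<^sub>R x \<in> {d. y \<bullet> d \<le> 0 \<and> (y \<bullet> d = 0 \<longrightarrow> - d \<in> C)}"
      proof (cases "c = 0")
        case True then show ?thesis using convex_cone_contains_0[OF Ccc] by simp
      next
        case False
        then have "c > 0" using c by simp
        then show ?thesis using x convex_cone_scaleR[OF Ccc, of c "-x"]
          by (auto simp: mult_nonneg_nonpos)
      qed
    qed
  qed
  show ?thesis
    unfolding C_def[symmetric]
  proof
    assume tc: "tightly_contains C v P"
    have P1: "P \<subseteq> {x. y \<bullet> x \<le> y \<bullet> v}"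
    proof
      fix x assume "x \<in> P"
      then have "x \<in> (\<lambda>x. x + v) ` C" using tc unfolding tightly_contains_def by blast
      then have "x - v \<in> C" by (simp only: transl_mem)
      then have "y \<bullet> (x - v) \<le> 0" using CK K_def by auto
      then show "x \<in> {x. y \<bullet> x \<le> y \<bullet> v}" by (simp add: inner_diff_right)
    qed
    obtain x where x0: "x \<in> P" "x \<in> (\<lambda>x. x + v) ` lineal C"
      using tc unfolding tightly_contains_def by blast
    then have x: "x \<in> P" "x - v \<in> lineal C" by (simp_all only: transl_mem)
    have "x - v \<in> C" using x(2) unfolding lineal_def by blast
    obtain c where c: "c \<in> C" "x - v = - c" using x(2) unfolding lineal_def by blast
    have "-(x - v) \<in> C" using c by simp
    note xv = \<open>x - v \<in> C\<close> this
    from xv have "y \<bullet> (x - v) \<le> 0" "y \<bullet> (-(x - v)) \<le> 0" using CK K_def by auto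
    then have "y \<bullet> x = y \<bullet> v" by (simp add: inner_diff_right)
    then have P2: "{} \<subset> P \<inter> {x. y \<bullet> x = y \<bullet> v}" using x by auto
    have P3: "P \<inter> {x. y \<bullet> x = y \<bullet> v} \<subseteq> (\<lambda>x. x + v) ` lineal C"
    proof clarify
      fix x assume "x \<in> P" "y \<bullet> x = y \<bullet> v"
      then have "x - v \<in> C" "y \<bullet> (x - v) = 0"
        using tc transl_mem unfolding tightly_contains_def by (blast, simp add: inner_diff_right)
      then have "-(x - v) \<in> C" using CK K_def by auto
      then have "x - v \<in> lineal C" using \<open>x - v \<in> C\<close> unfolding lineal_def
        by (auto simp: image_iff intro: bexI[of _ "-(x-v)"])
      then show "x \<in> (\<lambda>x. x + v) ` lineal C" by (simp only: transl_mem)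
    qed
    show "P \<subseteq> {x. y \<bullet> x \<le> y \<bullet> v} \<and> {} \<subset> P \<inter> {x. y \<bullet> x = y \<bullet> v} \<and>
        P \<inter> {x. y \<bullet> x = y \<bullet> v} \<subseteq> (\<lambda>x. x + v) ` lineal C"
      using P1 P2 P3 by blast
  next
    assume R: "P \<subseteq> {x. y \<bullet> x \<le> y \<bullet> v} \<and> {} \<subset> P \<inter> {x. y \<bullet> x = y \<bullet> v} \<and>
        P \<inter> {x. y \<bullet> x = y \<bullet> v} \<subseteq> (\<lambda>x. x + v) ` lineal C"
    define G where "G = P \<inter> {x. y \<bullet> x = y \<bullet> v}"
    have polyP: "polyhedron P" using assms(5) by (simp add: ext_deformations_def)
    have GP: "G face_of P" unfolding G_def
      using R polyP polyhedron_imp_convex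
      by (intro face_of_Int_supporting_hyperplane_le) auto
    have Gne: "G \<noteq> {}" using R G_def by auto
    have yG: "argmax_on P y = G"
    proof -
      obtain g where g: "g \<in> G" using Gne by blast
      have g1: "g \<in> P" "y \<bullet> g = y \<bullet> v" using g G_def by auto
      have Ple: "\<forall>z\<in>P. y \<bullet> z \<le> y \<bullet> v" using R by blast
      show ?thesis
      proof
        show "argmax_on P y \<subseteq> G"
        proof
          fix x assume x: "x \<in> argmax_on P y"
          then have "x \<in> P" "y \<bullet> g \<le> y \<bullet> x" using g1 unfolding argmax_on_def by auto
          then show "x \<in> G" using Ple G_def g1 by fastforce
        qed
        show "G \<subseteq> argmax_on P y" unfolding argmax_on_def G_def using Ple by auto
      qed
    qed
    have "normal_cone P G \<in> normal_fan P" unfolding normal_fan_def using GP Gne by blast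
    then obtain S where S: "S \<subseteq> normal_fan Q" "normal_cone P G = \<Union>S"
      using assms(5) unfolding ext_deformations_def by blast
    have "y \<in> normal_cone P G" using yG by (simp add: normal_cone_def)
    then obtain \<sigma> where "\<sigma> \<in> S" "y \<in> \<sigma>" using S by blast
    then obtain F' where F': "\<sigma> = normal_cone Q F'" using S unfolding normal_fan_def by blast
    then have "F' = F" using \<open>y \<in> \<sigma>\<close> yF by (simp add: normal_cone_def)
    then have sub: "normal_cone Q F \<subseteq> normal_cone P G" using F' \<open>\<sigma> \<in> S\<close> S by blast
    have key: "argmax_on P z = G" if "argmax_on Q z = F" for z
      using sub that by (auto simp: normal_cone_def)
    obtain f0 where f0: "f0 \<in> rel_interior F"
      using assms(2,3) face_of_imp_convex rel_interior_eq_empty by blast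
    have f0F: "f0 \<in> F" using f0 rel_interior_subset by blast
    have "p - v \<in> C" if p: "p \<in> P" for p
    proof -
      obtain g where g: "g \<in> G" using Gne by blast
      have "g \<in> (\<lambda>x. x + v) ` lineal C" using R g G_def by blast
      then have "g - v \<in> lineal C" by (simp only: transl_mem)
      then have gv: "g - v \<in> C" unfolding lineal_def by auto
      define d where "d = p - g"
      have "a \<bullet> d \<le> 0" if a: "\<forall>q\<in>Q. a \<bullet> q \<le> b" "a \<bullet> f0 = b" for a b
      proof -
        have "F \<subseteq> Q \<inter> {x. a \<bullet> x = b}"
        proof -
          have T: "(F \<inter> {x. a \<bullet> x = b}) face_of F"
            using a FQ assms(2) face_of_imp_convex
            by (intro face_of_Int_supporting_hyperplane_le) auto
          have "F \<subseteq> F \<inter> {x. a \<bullet> x = b}"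
            by (rule subset_of_face_of[OF T]) (use f0 f0F a in auto)
          then show ?thesis using FQ by auto
        qed
        then have aF: "a \<bullet> f = b" if "f \<in> F" for f using that by auto
        have zF: "argmax_on Q (a + e *\<^sub>R y) = F" if e: "e > 0" for e
        proof
          show "F \<subseteq> argmax_on Q (a + e *\<^sub>R y)"
            unfolding argmax_on_def
          proof clarify
            fix f assume f: "f \<in> F"
            show "f \<in> Q \<and> (\<forall>z\<in>Q. (a + e *\<^sub>R y) \<bullet> z \<le> (a + e *\<^sub>R y) \<bullet> f)"
            proof (intro conjI ballI)
              show "f \<in> Q" using f FQ by auto
              fix q assume q: "q \<in> Q"
              have "a \<bullet> q \<le> a \<bullet> f" using a q aF f by auto
              moreover have "e * (y \<bullet> q) \<le> e * (y \<bullet> f)" using yle[OF q f] e by simp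
              ultimately show "(a + e *\<^sub>R y) \<bullet> q \<le> (a + e *\<^sub>R y) \<bullet> f"
                by (simp add: inner_add_left)
            qed
          qed
          show "argmax_on Q (a + e *\<^sub>R y) \<subseteq> F"
          proof
            fix x assume x: "x \<in> argmax_on Q (a + e *\<^sub>R y)"
            have xQ: "x \<in> Q" using x argmax_on_def by auto
            have "(a + e *\<^sub>R y) \<bullet> f0 \<le> (a + e *\<^sub>R y) \<bullet> x"
              using x f0F FQ unfolding argmax_on_def by auto
            moreover have "a \<bullet> x \<le> a \<bullet> f0" using a xQ by auto
            ultimately have "e * (y \<bullet> f0) \<le> e * (y \<bullet> x)" by (simp add: inner_add_left)
            then have "y \<bullet> f0 \<le> y \<bullet> x" using e by simp
            then have "\<forall>q\<in>Q. y \<bullet> q \<le> y \<bullet> x" using yle f0F by (meson order_trans)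
            then have "x \<in> argmax_on Q y" using xQ unfolding argmax_on_def by blast
            then show "x \<in> F" using yF by simp
          qed
        qed
        have ineq: "a \<bullet> d + e * (y \<bullet> d) \<le> 0" if e: "e > 0" for e
        proof -
          have "argmax_on P (a + e *\<^sub>R y) = G" using key zF e by blast
          then have "(a + e *\<^sub>R y) \<bullet> p \<le> (a + e *\<^sub>R y) \<bullet> g" using g p unfolding argmax_on_def by blast
          then show ?thesis by (simp add: d_def inner_add_left inner_diff_right algebra_simps)
        qed
        show ?thesis
        proof (rule ccontr)
          assume "\<not> a \<bullet> d \<le> 0"
          then have pos: "a \<bullet> d > 0" by simp
          define e where "e = (a \<bullet> d) / (2 * (\<bar>y \<bullet> d\<bar> + 1))"
          have e0: "e > 0" using pos by (simp add: e_def)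
          have "e * \<bar>y \<bullet> d\<bar> \<le> e * (\<bar>y \<bullet> d\<bar> + 1)" using e0 by simp
          also have "\<dots> = (a \<bullet> d) / 2" unfolding e_def by (simp add: field_simps)
          finally have "e * \<bar>y \<bullet> d\<bar> \<le> (a \<bullet> d) / 2" .
          moreover have "- (e * \<bar>y \<bullet> d\<bar>) \<le> e * (y \<bullet> d)"
          proof -
            have "-\<bar>y \<bullet> d\<bar> \<le> y \<bullet> d" by simp
            then have "e * (-\<bar>y \<bullet> d\<bar>) \<le> e * (y \<bullet> d)" using e0 by (intro mult_left_mono) auto
            then show ?thesis by simp
          qed
          ultimately show False using ineq[OF e0] pos by linarith
        qed
      qed
      then obtain t where t: "t > 0" "f0 + t *\<^sub>R d \<in> Q"
        using dir_into_polyhedron[OF assms(1)] f0F FQ by blast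
      then have "t *\<^sub>R d \<in> C" using gen[of "f0 + t *\<^sub>R d" f0] f0F by simp
      then have "(1 / t) *\<^sub>R (t *\<^sub>R d) \<in> C" using convex_cone_scaleR[OF Ccc, of "1/t" "t *\<^sub>R d"] t by (simp del: scaleR_scaleR)
      then have "d \<in> C" using t by simp
      then have "d + (g - v) \<in> C" using convex_cone_add[OF Ccc] gv by blast
      then show ?thesis by (simp add: d_def)
    qed
    then have "P \<subseteq> (\<lambda>x. x + v) ` C" by (auto simp only: transl_mem)
    moreover have "P \<inter> (\<lambda>x. x + v) ` lineal C \<noteq> {}" using R by blast
    ultimately show "tightly_contains C v P" unfolding tightly_contains_def by blast
  qed
qed

end
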